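(* Let $G$ be a graph, let $k\ge 0$, let $C\subseteq V(G)$, and let $x_0\in V(G)\setminus C$, such that $G[C]$ is connected, $x_0$ has a neighbour in $C$, and $\chi(C)>k\,\chi^1(G)$. Then there is an induced path $x_0\hbox{-}\cdots\hbox{-}x_k$ of $G$ with $x_1,\ldots,x_k\in C$, and a subset $C'$ of $C$, such that: $x_0,\ldots,x_k\notin C'$; $G[C']$ is connected; $x_k$ has a neighbour in $C'$, and $x_0,\ldots,x_{k-1}$ have no neighbours in $C'$; and $\chi(C')\ge \chi(C)-k\,\chi^1(G)$.
   Context: Graphs are finite and simple. For $X\subseteq V(G)$, $\chi(X)$ means $\chi(G[X])$. $N^1[v]$ is the set consisting of $v$ and its neighbours, and $\chi^1(G)$ is the maximum of $\chi(N^1[v])$ over all $v\in V(G)$ (and $0$ for the null graph). *)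

theory Defs
  imports Main
begin

definition graph :: "'a set \<Rightarrow> ('a \<Rightarrow> 'a \<Rightarrow> bool) \<Rightarrow> bool" where
  "graph V E \<longleftrightarrow> finite V \<and> (\<forall>u v. E u v \<longrightarrow> u \<in> V \<and> v \<in> V)
     \<and> (\<forall>u v. E u v \<longrightarrow> E v u) \<and> (\<forall>v. \<not> E v v)"

definition colourable :: "('a \<Rightarrow> 'a \<Rightarrow> bool) \<Rightarrow> 'a set \<Rightarrow> nat \<Rightarrow> bool" where
  "colourable E X k \<longleftrightarrow> (\<exists>f::'a \<Rightarrow> nat. (\<forall>v\<in>X. f v < k)
      \<and> (\<forall>u\<in>X. \<forall>v\<in>X. E u v \<longrightarrow> f u \<noteq> f v))"

definition chi :: "('a \<Rightarrow> 'a \<Rightarrow> bool) \<Rightarrow> 'a set \<Rightarrow> nat" where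
  "chi E X = (LEAST k. colourable E X k)"

definition N1 :: "('a \<Rightarrow> 'a \<Rightarrow> bool) \<Rightarrow> 'a \<Rightarrow> 'a set" where
  "N1 E v = insert v {u. E v u}"

definition chi1 :: "'a set \<Rightarrow> ('a \<Rightarrow> 'a \<Rightarrow> bool) \<Rightarrow> nat" where
  "chi1 V E = (if V = {} then 0 else Max ((\<lambda>v. chi E (N1 E v)) ` V))"

definition connected_in :: "('a \<Rightarrow> 'a \<Rightarrow> bool) \<Rightarrow> 'a set \<Rightarrow> bool" where
  "connected_in E C \<longleftrightarrow> C \<noteq> {} \<and>
     (\<forall>u\<in>C. \<forall>v\<in>C. (\<lambda>a b. E a b \<and> a \<in> C \<and> b \<in> C)\<^sup>*\<^sup>* u v)"

definition induced_path :: "'a set \<Rightarrow> ('a \<Rightarrow> 'a \<Rightarrow> bool) \<Rightarrow> (nat \<Rightarrow> 'a) \<Rightarrow> nat \<Rightarrow> bool" where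
  "induced_path V E x k \<longleftrightarrow> (\<forall>i\<le>k. x i \<in> V) \<and> inj_on x {0..k}
     \<and> (\<forall>i\<le>k. \<forall>j\<le>k. E (x i) (x j) \<longleftrightarrow> (i = j + 1 \<or> j = i + 1))"

end

theory Submission
  imports Defs
begin

definition rr :: "('a \<Rightarrow> 'a \<Rightarrow> bool) \<Rightarrow> 'a set \<Rightarrow> 'a \<Rightarrow> 'a \<Rightarrow> bool" where
  "rr E X = (\<lambda>a b. E a b \<and> a \<in> X \<and> b \<in> X)"

definition cmpt :: "('a \<Rightarrow> 'a \<Rightarrow> bool) \<Rightarrow> 'a set \<Rightarrow> 'a \<Rightarrow> 'a set" where
  "cmpt E X d = {w. (rr E X)\<^sup>*\<^sup>* d w}"

lemma rr_iff: "rr E X a b \<longleftrightarrow> E a b \<and> a \<in> X \<and> b \<in> X"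
  by (simp add: rr_def)

lemma connected_in_rr: "connected_in E C \<longleftrightarrow> C \<noteq> {} \<and> (\<forall>u\<in>C. \<forall>v\<in>C. (rr E C)\<^sup>*\<^sup>* u v)"
  by (simp add: connected_in_def rr_def)

lemma g_sym: "graph V E \<Longrightarrow> E u v \<Longrightarrow> E v u" by (simp add: graph_def)
lemma g_irr: "graph V E \<Longrightarrow> \<not> E v v" by (simp add: graph_def)
lemma g_V: "graph V E \<Longrightarrow> E u v \<Longrightarrow> u \<in> V \<and> v \<in> V" by (simp add: graph_def)
lemma g_fin: "graph V E \<Longrightarrow> finite V" by (simp add: graph_def)

lemma col_mono: assumes "colourable E X k" "Y \<subseteq> X" shows "colourable E Y k"
proof -
  obtain f where f: "\<forall>v\<in>X. f v < k" "\<forall>u\<in>X. \<forall>v\<in>X. E u v \<longrightarrow> f u \<noteq> f v"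
    using assms(1) unfolding colourable_def by blast
  show ?thesis unfolding colourable_def
    by (rule exI[of _ f]) (use f assms(2) in blast)
qed

lemma col_le: assumes "colourable E X k" "k \<le> m" shows "colourable E X m"
proof -
  obtain f where f: "\<forall>v\<in>X. f v < k" "\<forall>u\<in>X. \<forall>v\<in>X. E u v \<longrightarrow> f u \<noteq> f v"
    using assms(1) unfolding colourable_def by blast
  show ?thesis unfolding colourable_def
    by (rule exI[of _ f]) (use f assms(2) in fastforce)
qed

lemma col_fin: assumes "graph V E" "X \<subseteq> V" shows "colourable E X (card X)"
proof -
  have "finite X" using assms g_fin finite_subset by blast
  then obtain f where f: "bij_betw f X {0..<card X}" using ex_bij_betw_finite_nat by blast
  show ?thesis unfolding colourable_def
  proof (intro exI[of _ f] conjI ballI impI)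
    fix v assume "v \<in> X" then show "f v < card X" using f bij_betw_apply by fastforce
  next
    fix u v assume "u \<in> X" "v \<in> X" "E u v"
    then have "u \<noteq> v" using g_irr assms(1) by metis
    then show "f u \<noteq> f v" using f \<open>u \<in> X\<close> \<open>v \<in> X\<close> unfolding bij_betw_def inj_on_def by blast
  qed
qed

lemma chi_col: "graph V E \<Longrightarrow> X \<subseteq> V \<Longrightarrow> colourable E X (chi E X)"
  unfolding chi_def by (rule LeastI, rule col_fin)

lemma chi_le: "colourable E X k \<Longrightarrow> chi E X \<le> k"
  unfolding chi_def by (rule Least_le)

lemma chi_mono: "graph V E \<Longrightarrow> X \<subseteq> V \<Longrightarrow> Y \<subseteq> X \<Longrightarrow> chi E Y \<le> chi E X"
  by (meson chi_col chi_le col_mono)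

lemma col_union: assumes "colourable E (X-N) a" "colourable E (X\<inter>N) b" shows "colourable E X (a+b)"
proof -
  obtain f where f: "\<forall>v\<in>X-N. f v < a" "\<forall>u\<in>X-N. \<forall>v\<in>X-N. E u v \<longrightarrow> f u \<noteq> f v"
    using assms(1) unfolding colourable_def by blast
  obtain g where g: "\<forall>v\<in>X\<inter>N. g v < b" "\<forall>u\<in>X\<inter>N. \<forall>v\<in>X\<inter>N. E u v \<longrightarrow> g u \<noteq> g v"
    using assms(2) unfolding colourable_def by blast
  show ?thesis unfolding colourable_def
  proof (intro exI[of _ "\<lambda>v. if v \<in> N then a + g v else f v"] conjI ballI impI)
    fix v assume "v \<in> X" then show "(if v \<in> N then a + g v else f v) < a + b"
    proof (cases "v \<in> N")
      case True then have "g v < b" using g(1) \<open>v \<in> X\<close> by blast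
      then show ?thesis using True by simp
    next
      case False then have "f v < a" using f(1) \<open>v \<in> X\<close> by blast
      then show ?thesis using False by simp
    qed
  next
    fix u v assume uv: "u \<in> X" "v \<in> X" "E u v"
    show "(if u \<in> N then a + g u else f u) \<noteq> (if v \<in> N then a + g v else f v)"
    proof (cases "u \<in> N"; cases "v \<in> N")
      assume "u \<in> N" "v \<in> N" then show ?thesis using g(2) uv by simp
    next
      assume "u \<in> N" "v \<notin> N"
      then have "f v < a" using f(1) uv by blast
      then show ?thesis using \<open>u \<in> N\<close> \<open>v \<notin> N\<close> by simp
    next
      assume "u \<notin> N" "v \<in> N"
      then have "f u < a" using f(1) uv by blast
      then show ?thesis using \<open>v \<in> N\<close> \<open>u \<notin> N\<close> by simp
    next
      assume "u \<notin> N" "v \<notin> N" then show ?thesis using f(2) uv by simp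
    qed
  qed
qed

lemma chi_diff: "graph V E \<Longrightarrow> X \<subseteq> V \<Longrightarrow> chi E X \<le> chi E (X-N) + chi E (X\<inter>N)"
  by (meson chi_col chi_le col_union Diff_subset inf_le1 order_trans)

lemma chi_pos: "0 < chi E X \<Longrightarrow> X \<noteq> {}"
proof
  assume "0 < chi E X" "X = {}"
  moreover have "colourable E {} 0" unfolding colourable_def by simp
  ultimately show False using chi_le by fastforce
qed

lemma chi_N1: assumes "graph V E" "v \<in> V" "Y \<subseteq> N1 E v" shows "chi E Y \<le> chi1 V E"
proof -
  have "N1 E v \<subseteq> V" unfolding N1_def using assms(2) g_V[OF assms(1)] by auto
  then have "chi E Y \<le> chi E (N1 E v)" using chi_mono assms by metis
  also have "\<dots> \<le> chi1 V E" unfolding chi1_def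
    using Max_ge[of "(\<lambda>v. chi E (N1 E v)) ` V"] g_fin[OF assms(1)] assms(2) by auto
  finally show ?thesis .
qed

lemma rr_sym: assumes "graph V E" "(rr E X)\<^sup>*\<^sup>* a b" shows "(rr E X)\<^sup>*\<^sup>* b a"
  using assms(2)
proof (induction rule: rtranclp_induct)
  case base then show ?case by simp
next
  case (step b c)
  then have "rr E X c b" using g_sym[OF assms(1)] unfolding rr_iff by blast
  then show ?case using step converse_rtranclp_into_rtranclp by metis
qed

lemma comp_sub: "d \<in> X \<Longrightarrow> cmpt E X d \<subseteq> X"
  unfolding cmpt_def
proof
  fix w assume "d \<in> X" "w \<in> {w. (rr E X)\<^sup>*\<^sup>* d w}"
  then have "(rr E X)\<^sup>*\<^sup>* d w" by simp
  then show "w \<in> X" using \<open>d \<in> X\<close> by (cases rule: rtranclp.cases) (auto simp: rr_iff)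
qed

lemma comp_closed: "d \<in> X \<Longrightarrow> w \<in> cmpt E X d \<Longrightarrow> w' \<in> X \<Longrightarrow> E w w' \<Longrightarrow> w' \<in> cmpt E X d"
proof -
  assume a: "d \<in> X" "w \<in> cmpt E X d" "w' \<in> X" "E w w'"
  then have "w \<in> X" using comp_sub[OF a(1)] by blast
  then have "rr E X w w'" using a unfolding rr_iff by blast
  then show ?thesis using a(2) unfolding cmpt_def by (simp add: rtranclp.rtrancl_into_rtrancl)
qed

lemma comp_transfer:
  assumes "(rr E X)\<^sup>*\<^sup>* a b" "a \<in> cmpt E X d" shows "(rr E (cmpt E X d))\<^sup>*\<^sup>* a b"
  using assms(1)
proof (induction rule: rtranclp_induct)
  case base then show ?case by simp
next
  case (step b c)
  have db: "(rr E X)\<^sup>*\<^sup>* d b" using assms(2) step(1) unfolding cmpt_def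
    using rtranclp_trans[of "rr E X" d a b] by simp
  then have "b \<in> cmpt E X d" unfolding cmpt_def by simp
  moreover have "(rr E X)\<^sup>*\<^sup>* d c" using db step(2) by (rule rtranclp.rtrancl_into_rtrancl)
  then have "c \<in> cmpt E X d" unfolding cmpt_def by simp
  ultimately have "rr E (cmpt E X d) b c" using step(2) unfolding rr_iff by blast
  then show ?case using step(3) by (simp add: rtranclp.rtrancl_into_rtrancl)
qed

lemma comp_conn: assumes "graph V E" "d \<in> X" shows "connected_in E (cmpt E X d)"
  unfolding connected_in_rr
proof (intro conjI ballI)
  show "cmpt E X d \<noteq> {}" unfolding cmpt_def by auto
next
  fix u v assume u: "u \<in> cmpt E X d" and v: "v \<in> cmpt E X d"
  then have "(rr E X)\<^sup>*\<^sup>* u v" using rr_sym[OF assms(1)] unfolding cmpt_def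
    by (meson mem_Collect_eq rtranclp_trans)
  then show "(rr E (cmpt E X d))\<^sup>*\<^sup>* u v" using comp_transfer u by metis
qed

lemma comp_eq: assumes "graph V E" "rr E X u v" shows "cmpt E X u = cmpt E X v"
proof -
  have "rr E X v u" using assms g_sym[OF assms(1)] unfolding rr_iff by blast
  then show ?thesis using assms(2) unfolding cmpt_def
    by (auto intro: converse_rtranclp_into_rtranclp)
qed

lemma big_comp: assumes "graph V E" "X \<subseteq> V" "X \<noteq> {}"
  shows "\<exists>d\<in>X. chi E X \<le> chi E (cmpt E X d)"
proof (rule ccontr)
  assume "\<not> ?thesis"
  then have lt: "\<forall>d\<in>X. chi E (cmpt E X d) < chi E X" by auto
  define m where "m = chi E X - 1"
  have cm: "\<forall>d\<in>X. colourable E (cmpt E X d) m"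
  proof
    fix d assume "d \<in> X"
    then have "cmpt E X d \<subseteq> V" using comp_sub[OF \<open>d \<in> X\<close>] assms(2) by blast
    then have c1: "colourable E (cmpt E X d) (chi E (cmpt E X d))" by (rule chi_col[OF assms(1)])
    have "chi E (cmpt E X d) \<le> m" using lt \<open>d \<in> X\<close> unfolding m_def by fastforce
    then show "colourable E (cmpt E X d) m" using c1 col_le by blast
  qed
  define g where "g S = (SOME f::'a\<Rightarrow>nat. (\<forall>v\<in>S. f v < m) \<and> (\<forall>u\<in>S. \<forall>v\<in>S. E u v \<longrightarrow> f u \<noteq> f v))" for S
  have gS: "(\<forall>v\<in>S. g S v < m) \<and> (\<forall>u\<in>S. \<forall>v\<in>S. E u v \<longrightarrow> g S u \<noteq> g S v)"
    if "colourable E S m" for S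
    using that unfolding g_def colourable_def by (rule someI_ex)
  have gp: "\<forall>d\<in>X. (\<forall>v\<in>cmpt E X d. g (cmpt E X d) v < m) \<and>
     (\<forall>u\<in>cmpt E X d. \<forall>v\<in>cmpt E X d. E u v \<longrightarrow> g (cmpt E X d) u \<noteq> g (cmpt E X d) v)"
    using cm gS by blast
  have self: "v \<in> cmpt E X v" for v unfolding cmpt_def by simp
  have "colourable E X m" unfolding colourable_def
  proof (intro exI[of _ "\<lambda>v. g (cmpt E X v) v"] conjI ballI impI)
    fix v assume "v \<in> X" then show "g (cmpt E X v) v < m" using gp self by blast
  next
    fix u v assume uv: "u \<in> X" "v \<in> X" "E u v"
    then have "cmpt E X u = cmpt E X v" using comp_eq[OF assms(1)] unfolding rr_iff by blast
    then show "g (cmpt E X u) u \<noteq> g (cmpt E X v) v" using gp uv self by metis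
  qed
  then have "chi E X \<le> m" by (rule chi_le)
  moreover have "chi E X > 0"
  proof -
    obtain d where "d \<in> X" using assms(3) by blast
    then show ?thesis using lt by fastforce
  qed
  ultimately show False unfolding m_def by linarith
qed

lemma exit_edge:
  assumes "connected_in E C'" "d0 \<in> C' - N" "n \<in> N \<inter> C'"
  shows "\<exists>y\<in>N\<inter>C'. \<exists>z\<in>cmpt E (C'-N) d0. E z y"
proof -
  let ?D = "cmpt E (C'-N) d0"
  have path: "(rr E C')\<^sup>*\<^sup>* d0 n" using assms unfolding connected_in_rr by blast
  have "\<And>w. (rr E C')\<^sup>*\<^sup>* d0 w \<Longrightarrow> w \<in> ?D \<or> (\<exists>y\<in>N\<inter>C'. \<exists>z\<in>?D. E z y)"
  proof -
    fix w assume "(rr E C')\<^sup>*\<^sup>* d0 w"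
    then show "w \<in> ?D \<or> (\<exists>y\<in>N\<inter>C'. \<exists>z\<in>?D. E z y)"
    proof (induction rule: rtranclp_induct)
      case base then show ?case unfolding cmpt_def by simp
    next
      case (step w w')
      show ?case
      proof (cases "w \<in> ?D")
        case True
        show ?thesis
        proof (cases "w' \<in> N")
          case True
          then show ?thesis using step(2) \<open>w \<in> ?D\<close> unfolding rr_iff by blast
        next
          case False
          then have "w' \<in> C' - N" using step(2) unfolding rr_iff by blast
          then show ?thesis using comp_closed[OF assms(2) \<open>w \<in> ?D\<close>] step(2) unfolding rr_iff by blast
        qed
      next
        case False then show ?thesis using step(3) by blast
      qed
    qed
  qed
  moreover have "n \<notin> ?D" using comp_sub[OF assms(2)] assms(3) by blast
  ultimately show ?thesis using path by blast
qed

lemma main_ind: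
  fixes V :: "'a set" and E :: "'a \<Rightarrow> 'a \<Rightarrow> bool" and k :: nat and C :: "'a set" and x0 :: 'a
  assumes G: "graph V E"
    and CV: "C \<subseteq> V"
    and x0: "x0 \<in> V - C"
    and Cc: "connected_in E C"
    and x0n: "\<exists>c\<in>C. E x0 c"
  shows "chi E C > k * chi1 V E \<Longrightarrow> \<exists>(x :: nat \<Rightarrow> 'a) C'. x 0 = x0 \<and> induced_path V E x k \<and> (\<forall>i\<in>{1..k}. x i \<in> C)
     \<and> C' \<subseteq> C \<and> (\<forall>i\<le>k. x i \<notin> C') \<and> connected_in E C'
     \<and> (\<exists>c\<in>C'. E (x k) c) \<and> (\<forall>i<k. \<forall>c\<in>C'. \<not> E (x i) c)
     \<and> int (chi E C') \<ge> int (chi E C) - int k * int (chi1 V E)"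
proof (induction k)
  case 0
  have "induced_path V E (\<lambda>_. x0) 0" unfolding induced_path_def using x0 g_irr[OF G] by auto
  then show ?case using x0 Cc x0n by (intro exI[of _ "\<lambda>_. x0"] exI[of _ C]) auto
next
  case (Suc k)
  let ?c = "chi1 V E"
  have "k * ?c \<le> Suc k * ?c" by simp
  then have "chi E C > k * ?c" using Suc.prems by linarith
  then obtain x C' where A: "x 0 = x0" and ip: "induced_path V E x k" and xC: "\<forall>i\<in>{1..k}. x i \<in> C"
    and C'C: "C' \<subseteq> C" and xnot: "\<forall>i\<le>k. x i \<notin> C'" and conn: "connected_in E C'"
    and nb: "\<exists>c\<in>C'. E (x k) c" and nonb: "\<forall>i<k. \<forall>c\<in>C'. \<not> E (x i) c"
    and bd: "int (chi E C') \<ge> int (chi E C) - int k * int ?c"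
    using Suc.IH by blast
  define N where "N = {u. E (x k) u}"
  have xkV: "x k \<in> V" using ip unfolding induced_path_def by simp
  have C'V: "C' \<subseteq> V" using C'C CV by blast
  have "C' \<inter> N \<subseteq> N1 E (x k)" unfolding N_def N1_def by blast
  then have b1: "chi E (C' \<inter> N) \<le> ?c" using chi_N1[OF G xkV] by blast
  have b2: "chi E C' \<le> chi E (C' - N) + chi E (C' \<inter> N)" using chi_diff[OF G C'V] .
  have eq: "int (Suc k) * int ?c = int k * int ?c + int ?c" by (simp add: algebra_simps)
  have b3: "int (chi E (C' - N)) \<ge> int (chi E C) - int (Suc k) * int ?c" using b1 b2 bd eq by linarith
  have p: "int (Suc k) * int ?c < int (chi E C)" using Suc.prems by (metis of_nat_less_iff of_nat_mult)
  have "chi E (C' - N) > 0" using b3 p by linarith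
  then have ne: "C' - N \<noteq> {}" by (rule chi_pos)
  obtain d0 where d0: "d0 \<in> C' - N" and dD: "chi E (C' - N) \<le> chi E (cmpt E (C' - N) d0)"
    using big_comp[OF G _ ne] C'V by blast
  define D where "D = cmpt E (C' - N) d0"
  obtain n where n: "n \<in> N \<inter> C'" using nb unfolding N_def by blast
  obtain y z where y: "y \<in> N \<inter> C'" and z: "z \<in> D" and zy: "E z y"
    using exit_edge[OF conn d0 n] unfolding D_def by blast
  have DC': "D \<subseteq> C' - N" unfolding D_def using comp_sub[OF d0] .
  define x' where "x' = x(Suc k := y)"
  have x'k: "\<And>i. i \<le> k \<Longrightarrow> x' i = x i" unfolding x'_def by simp
  have x'S: "x' (Suc k) = y" unfolding x'_def by simp
  have yC: "y \<in> C" using y C'C by blast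
  have yV: "y \<in> V" using yC CV by blast
  have yx: "\<And>i. i \<le> k \<Longrightarrow> y \<noteq> x i" using xnot y by blast
  have Eyxk: "E y (x k)" using y g_sym[OF G] unfolding N_def by blast
  have nEy: "\<And>i. i < k \<Longrightarrow> \<not> E y (x i)" using nonb y g_sym[OF G] by blast
  have nEy2: "\<And>i. i < k \<Longrightarrow> \<not> E (x i) y" using nonb y by blast
  have Exky: "E (x k) y" using y unfolding N_def by blast
  have ip': "induced_path V E x' (Suc k)"
    unfolding induced_path_def
  proof (intro conjI allI impI)
    fix i assume "i \<le> Suc k" then show "x' i \<in> V"
      using ip x'k x'S yV unfolding induced_path_def by (metis le_SucE)
  next
    have "inj_on x' {0..k}" using ip x'k unfolding induced_path_def inj_on_def by simp
    moreover have "y \<notin> x' ` {0..k}"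
    proof
      assume "y \<in> x' ` {0..k}"
      then obtain i where "i \<le> k" "y = x' i" by auto
      then show False using yx x'k by metis
    qed
    ultimately have "inj_on x' (insert (Suc k) {0..k})" using x'S by simp
    moreover have "insert (Suc k) {0..k} = {0..Suc k}" by auto
    ultimately show "inj_on x' {0..Suc k}" by simp
  next
    fix i j assume ij: "i \<le> Suc k" "j \<le> Suc k"
    show "E (x' i) (x' j) = (i = j + 1 \<or> j = i + 1)"
    proof (cases "i = Suc k")
      case True
      show ?thesis
      proof (cases "j = Suc k")
        case True then show ?thesis using \<open>i = Suc k\<close> g_irr[OF G] by simp
      next
        case False
        then have "j \<le> k" using ij by simp
        then show ?thesis using \<open>i = Suc k\<close> x'S x'k Eyxk nEy
          by (cases "j = k") auto
      qed
    next
      case False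
      then have ik: "i \<le> k" using ij by simp
      show ?thesis
      proof (cases "j = Suc k")
        case True
        then show ?thesis using ik x'S x'k Exky nEy2
          by (cases "i = k") auto
      next
        case False
        then have "j \<le> k" using ij by simp
        then show ?thesis using ik x'k ip unfolding induced_path_def by simp
      qed
    qed
  qed
  show ?case
  proof (intro exI[of _ x'] exI[of _ D] conjI)
    show "x' 0 = x0" using A x'k by simp
    show "induced_path V E x' (Suc k)" by (rule ip')
    show "\<forall>i\<in>{1..Suc k}. x' i \<in> C" using xC x'k x'S yC by (metis atLeastAtMost_iff le_SucE)
    show "D \<subseteq> C" using DC' C'C by blast
    show "\<forall>i\<le>Suc k. x' i \<notin> D" using DC' xnot x'k x'S y by (metis DiffE IntE le_SucE subsetD)
    show "connected_in E D" unfolding D_def using comp_conn[OF G d0] .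
    show "\<exists>c\<in>D. E (x' (Suc k)) c" using z zy x'S g_sym[OF G] by blast
    show "\<forall>i<Suc k. \<forall>c\<in>D. \<not> E (x' i) c"
    proof (intro allI impI ballI)
      fix i c assume "i < Suc k" "c \<in> D"
      then have cC: "c \<in> C' - N" using DC' by blast
      show "\<not> E (x' i) c"
      proof (cases "i = k")
        case True then show ?thesis using cC x'k unfolding N_def by simp
      next
        case False then show ?thesis using cC x'k nonb \<open>i < Suc k\<close> by simp
      qed
    qed
    show "int (chi E D) \<ge> int (chi E C) - int (Suc k) * int ?c" using b3 dD unfolding D_def by simp
  qed
qed

theorem mainTheorem4:
  fixes V :: "'a set" and E :: "'a \<Rightarrow> 'a \<Rightarrow> bool" and k :: nat and C :: "'a set" and x0 :: 'a
  assumes "graph V E"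
    and "C \<subseteq> V"
    and "x0 \<in> V - C"
    and "connected_in E C"
    and "\<exists>c\<in>C. E x0 c"
    and "chi E C > k * chi1 V E"
  shows "\<exists>(x :: nat \<Rightarrow> 'a) C'. x 0 = x0 \<and> induced_path V E x k \<and> (\<forall>i\<in>{1..k}. x i \<in> C)
     \<and> C' \<subseteq> C \<and> (\<forall>i\<le>k. x i \<notin> C') \<and> connected_in E C'
     \<and> (\<exists>c\<in>C'. E (x k) c) \<and> (\<forall>i<k. \<forall>c\<in>C'. \<not> E (x i) c)
     \<and> int (chi E C') \<ge> int (chi E C) - int k * int (chi1 V E)"
  using main_ind[OF assms(1-5)] assms(6) by blast

end
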